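(* Let $F(x,y_0,y_1,\ldots,y_n)$ be holomorphic in a neighbourhood of $0\in\mathbb{C}^{n+2}$ with $F(0)=0$, and let $\varphi\in\mathcal{D}$. Then $F(x,\varphi,\delta\varphi,\ldots,\delta^n\varphi)\in\mathcal{D}$.
   Context: $\mathcal{D}$ is the ring of formal Dulac series $\sum_{k\ge1}c_k(t)x^{\lambda_k}$ with $t=\ln x$, $c_k\in\mathbb{C}[t]$, $\lambda_k\in\mathbb{C}$, $0<\mathrm{Re}\,\lambda_1\le\mathrm{Re}\,\lambda_2\le\ldots\to\infty$ (sum of two such series: union of exponent sets; product: collect terms with equal exponents). The operator $\delta=x\,d/dx$ acts on $\mathcal{D}$ by $\delta\bigl(\sum c_k(t)x^{\lambda_k}\bigr)=\sum(\lambda_k+\tfrac{d}{dt})c_k(t)\,x^{\lambda_k}$. $F(x,\varphi,\ldots,\delta^n\varphi)$ means the formal sum $\sum_{d\ge1}F_d(x,\varphi,\ldots,\delta^n\varphi)$, where $F=\sum_{d\ge1}F_d$ is the expansion of $F$ into homogeneous polynomials $F_d$ of degree $d$; the claim includes that this sum is well defined (for each $N$ only finitely many terms contribute exponents with real part $<N$). *)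

theory Defs
  imports "HOL-Analysis.Analysis" "HOL-Computational_Algebra.Polynomial"
begin

text \<open>Formal Dulac series are represented by their coefficient function:
  a raw series c assigns to each exponent lam the polynomial coefficient
  c lam in C[t] (t = ln x).  The series is c_1(t) x^lam_1 + c_2(t) x^lam_2 + ...,
  summing over the exponents with nonzero coefficient.\<close>

type_synonym dser = "complex \<Rightarrow> complex poly"

definition is_dulac :: "dser \<Rightarrow> bool" where
  "is_dulac c \<longleftrightarrow> (\<forall>lam. c lam \<noteq> 0 \<longrightarrow> 0 < Re lam)
                   \<and> (\<forall>N::real. finite {lam. c lam \<noteq> 0 \<and> Re lam < N})"

definition dadd :: "dser \<Rightarrow> dser \<Rightarrow> dser" where
  "dadd c e = (\<lambda>lam. c lam + e lam)"

definition dmul :: "dser \<Rightarrow> dser \<Rightarrow> dser" where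
  "dmul c e = (\<lambda>lam. \<Sum>mu\<in>{mu. c mu \<noteq> 0 \<and> e (lam - mu) \<noteq> 0}. c mu * e (lam - mu))"

definition dscale :: "complex \<Rightarrow> dser \<Rightarrow> dser" where
  "dscale k c = (\<lambda>lam. smult k (c lam))"

definition dsum :: "'i set \<Rightarrow> ('i \<Rightarrow> dser) \<Rightarrow> dser" where
  "dsum S f = (\<lambda>lam. \<Sum>s\<in>S. f s lam)"

definition done_ser :: dser where
  "done_ser = (\<lambda>lam. if lam = 0 then 1 else 0)"

definition dx :: dser where
  "dx = (\<lambda>lam. if lam = 1 then 1 else 0)"

definition dpow :: "dser \<Rightarrow> nat \<Rightarrow> dser" where
  "dpow c k = (dmul c ^^ k) done_ser"

text \<open>delta = x d/dx : (lam + d/dt) c(t) x^lam.\<close>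

definition ddelta :: "dser \<Rightarrow> dser" where
  "ddelta c = (\<lambda>lam. smult lam (c lam) + pderiv (c lam))"

text \<open>Variables of F: index 0 is x, index i+1 is y_i (i = 0..n).  Multi-indices
  are functions nat \<Rightarrow> nat vanishing above n+1.\<close>

definition multi_idx :: "nat \<Rightarrow> (nat \<Rightarrow> nat) set" where
  "multi_idx n = {alpha. \<forall>i>n+1. alpha i = 0}"

definition mono :: "nat \<Rightarrow> (nat \<Rightarrow> nat) \<Rightarrow> (nat \<Rightarrow> complex) \<Rightarrow> complex" where
  "mono n alpha y = (\<Prod>i\<le>n+1. y i ^ alpha i)"

definition holo_near0_coeffs ::
  "nat \<Rightarrow> ((nat \<Rightarrow> complex) \<Rightarrow> complex) \<Rightarrow> ((nat \<Rightarrow> nat) \<Rightarrow> complex) \<Rightarrow> bool" where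
  "holo_near0_coeffs n F a \<longleftrightarrow>
     (\<exists>r>0. \<forall>y. (\<forall>i\<le>n+1. norm (y i) < r) \<longrightarrow>
        ((\<lambda>alpha. a alpha * mono n alpha y) has_sum F y) (multi_idx n))"

definition dmono :: "nat \<Rightarrow> (nat \<Rightarrow> nat) \<Rightarrow> (nat \<Rightarrow> dser) \<Rightarrow> dser" where
  "dmono n alpha args = foldr (\<lambda>i acc. dmul (dpow (args i) (alpha i)) acc) [0..<n+2] done_ser"

definition subst_args :: "dser \<Rightarrow> nat \<Rightarrow> dser" where
  "subst_args phi i = (if i = 0 then dx else (ddelta ^^ (i - 1)) phi)"

definition Fd_subst :: "nat \<Rightarrow> ((nat \<Rightarrow> nat) \<Rightarrow> complex) \<Rightarrow> dser \<Rightarrow> nat \<Rightarrow> dser" where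
  "Fd_subst n a phi d =
     dsum {alpha \<in> multi_idx n. (\<Sum>i\<le>n+1. alpha i) = d}
          (\<lambda>alpha. dscale (a alpha) (dmono n alpha (subst_args phi)))"

end

theory Submission
  imports Defs
begin

definition good :: "real \<Rightarrow> dser \<Rightarrow> bool" where
  "good m c \<longleftrightarrow> (\<forall>lam. c lam \<noteq> 0 \<longrightarrow> m \<le> Re lam)
                   \<and> (\<forall>N::real. finite {lam. c lam \<noteq> 0 \<and> Re lam < N})"

lemma good_mono: "m' \<le> m \<Longrightarrow> good m c \<Longrightarrow> good m' c"
  unfolding good_def using order_trans by blast

lemma good_subset: "good m c \<Longrightarrow> (\<And>lam. c lam = 0 \<Longrightarrow> e lam = 0) \<Longrightarrow> good m e"
  unfolding good_def
proof (intro conjI allI impI)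
  fix lam assume "(\<forall>lam. c lam \<noteq> 0 \<longrightarrow> m \<le> Re lam) \<and> (\<forall>N. finite {lam. c lam \<noteq> 0 \<and> Re lam < N})"
    "\<And>lam. c lam = 0 \<Longrightarrow> e lam = 0" "e lam \<noteq> 0"
  then show "m \<le> Re lam" by blast
next
  fix N assume a: "(\<forall>lam. c lam \<noteq> 0 \<longrightarrow> m \<le> Re lam) \<and> (\<forall>N. finite {lam. c lam \<noteq> 0 \<and> Re lam < N})"
    and b: "\<And>lam. c lam = 0 \<Longrightarrow> e lam = 0"
  have "{lam. e lam \<noteq> 0 \<and> Re lam < N} \<subseteq> {lam. c lam \<noteq> 0 \<and> Re lam < N}" using b by blast
  then show "finite {lam. e lam \<noteq> 0 \<and> Re lam < N}"
    by (rule finite_subset) (use a in blast)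
qed

lemma good_done: "good 0 done_ser"
  unfolding good_def
proof (intro conjI allI impI)
  fix lam assume "done_ser lam \<noteq> 0" then show "0 \<le> Re lam" by (simp add: done_ser_def split: if_splits)
next
  fix N :: real
  have "{lam. done_ser lam \<noteq> 0 \<and> Re lam < N} \<subseteq> {0}" by (simp add: done_ser_def subset_iff)
  then show "finite {lam. done_ser lam \<noteq> 0 \<and> Re lam < N}" by (rule finite_subset) simp
qed

lemma good_dx: "good 1 dx"
  unfolding good_def
proof (intro conjI allI impI)
  fix lam assume "dx lam \<noteq> 0" then show "1 \<le> Re lam" by (simp add: dx_def split: if_splits)
next
  fix N :: real
  have "{lam. dx lam \<noteq> 0 \<and> Re lam < N} \<subseteq> {1}" by (simp add: dx_def subset_iff)
  then show "finite {lam. dx lam \<noteq> 0 \<and> Re lam < N}" by (rule finite_subset) simp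
qed

lemma good_dmul:
  assumes c: "good m1 c" and e: "good m2 e"
  shows "good (m1 + m2) (dmul c e)"
proof -
  have ex: "\<exists>mu. c mu \<noteq> 0 \<and> e (lam - mu) \<noteq> 0" if "dmul c e lam \<noteq> 0" for lam
  proof (rule ccontr)
    assume "\<not> ?thesis"
    then have E: "{mu. c mu \<noteq> 0 \<and> e (lam - mu) \<noteq> 0} = {}" by auto
    have "dmul c e lam = 0" unfolding dmul_def by (simp only: E sum.empty)
    then show False using that by simp
  qed
  show ?thesis unfolding good_def
  proof safe
    fix lam assume "dmul c e lam \<noteq> 0"
    then obtain mu where "c mu \<noteq> 0" "e (lam - mu) \<noteq> 0" using ex by blast
    then have "m1 \<le> Re mu" "m2 \<le> Re (lam - mu)" using c e unfolding good_def by auto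
    then show "m1 + m2 \<le> Re lam" by simp
  next
    fix N
    let ?A = "{u. c u \<noteq> 0 \<and> Re u < N - m2}"
    let ?B = "{v. e v \<noteq> 0 \<and> Re v < N - m1}"
    have fin: "finite (?A \<times> ?B)" using c e unfolding good_def by auto
    have "{lam. dmul c e lam \<noteq> 0 \<and> Re lam < N} \<subseteq> (\<lambda>(u,v). u + v) ` (?A \<times> ?B)"
    proof
      fix lam assume "lam \<in> {lam. dmul c e lam \<noteq> 0 \<and> Re lam < N}"
      then have l: "dmul c e lam \<noteq> 0" "Re lam < N" by auto
      then obtain mu where h: "c mu \<noteq> 0" "e (lam - mu) \<noteq> 0" using ex by blast
      then have "m1 \<le> Re mu" "m2 \<le> Re (lam - mu)" using c e unfolding good_def by auto
      with h l have "(mu, lam - mu) \<in> ?A \<times> ?B" by auto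
      then show "lam \<in> (\<lambda>(u,v). u + v) ` (?A \<times> ?B)"
        by (rule rev_image_eqI) simp
    qed
    then show "finite {lam. dmul c e lam \<noteq> 0 \<and> Re lam < N}"
      using fin finite_subset by blast
  qed
qed

lemma good_dpow: "good m c \<Longrightarrow> good (real k * m) (dpow c k)"
proof (induction k)
  case 0
  then show ?case by (simp add: dpow_def good_done)
next
  case (Suc k)
  have "dpow c (Suc k) = dmul c (dpow c k)" by (simp add: dpow_def)
  moreover have "good (m + real k * m) (dmul c (dpow c k))"
    using good_dmul[OF Suc.prems Suc.IH[OF Suc.prems]] .
  ultimately show ?case by (simp add: algebra_simps)
qed

lemma good_ddelta: "good m c \<Longrightarrow> good m (ddelta c)"
  by (erule good_subset) (simp add: ddelta_def)

lemma good_ddelta_pow: "good m c \<Longrightarrow> good m ((ddelta ^^ k) c)"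
  by (induction k) (auto intro: good_ddelta)

lemma good_dscale: "good m c \<Longrightarrow> good m (dscale k c)"
  by (erule good_subset) (simp add: dscale_def)

lemma good_zero: "good m (\<lambda>_. 0)"
  unfolding good_def by simp

lemma good_dadd: "good m c \<Longrightarrow> good m e \<Longrightarrow> good m (\<lambda>lam. c lam + e lam)"
  unfolding good_def
proof safe
  fix lam assume "\<forall>lam. c lam \<noteq> 0 \<longrightarrow> m \<le> Re lam" "\<forall>lam. e lam \<noteq> 0 \<longrightarrow> m \<le> Re lam"
    "c lam + e lam \<noteq> 0"
  then show "m \<le> Re lam" by force
next
  fix N assume "\<forall>N. finite {lam. c lam \<noteq> 0 \<and> Re lam < N}" "\<forall>N. finite {lam. e lam \<noteq> 0 \<and> Re lam < N}"
  then have "finite ({lam. c lam \<noteq> 0 \<and> Re lam < N} \<union> {lam. e lam \<noteq> 0 \<and> Re lam < N})" by auto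
  then show "finite {lam. c lam + e lam \<noteq> 0 \<and> Re lam < N}"
    by (rule finite_subset[rotated]) auto
qed

lemma good_dsum: "finite S \<Longrightarrow> (\<And>s. s \<in> S \<Longrightarrow> good m (f s)) \<Longrightarrow> good m (dsum S f)"
proof (induction S rule: finite_induct)
  case empty
  then show ?case by (simp add: dsum_def good_zero)
next
  case (insert x F)
  have "dsum (insert x F) f = (\<lambda>lam. f x lam + dsum F f lam)"
    using insert by (simp add: dsum_def)
  then show ?case using insert good_dadd by simp
qed

lemma good_foldr:
  assumes "\<And>i. good m (args i)" "0 \<le> m"
  shows "good (real (sum_list (map alpha xs)) * m)
     (foldr (\<lambda>i acc. dmul (dpow (args i) (alpha i)) acc) xs done_ser)"
proof (induction xs)
  case Nil
  then show ?case by (simp add: good_done)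
next
  case (Cons x xs)
  have "good (real (alpha x) * m + real (sum_list (map alpha xs)) * m)
     (dmul (dpow (args x) (alpha x)) (foldr (\<lambda>i acc. dmul (dpow (args i) (alpha i)) acc) xs done_ser))"
    by (rule good_dmul[OF good_dpow[OF assms(1)] Cons.IH])
  then show ?case by (simp add: algebra_simps)
qed

lemma good_dmono:
  assumes "\<And>i. good m (args i)" "0 \<le> m"
  shows "good (real (\<Sum>i\<le>n+1. alpha i) * m) (dmono n alpha args)"
proof -
  have eq: "sum_list (map alpha [0..<n+2]) = (\<Sum>i\<le>n+1. alpha i)"
  proof -
    have "set [0..<n+2] = {..n+1}" by auto
    then show ?thesis by (simp add: sum_list_distinct_conv_sum_set del: upt_Suc)
  qed
  have "good (real (sum_list (map alpha [0..<n+2])) * m) (dmono n alpha args)"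
    unfolding dmono_def by (rule good_foldr[OF assms])
  then show ?thesis unfolding eq .
qed

lemma finite_multi: "finite {alpha \<in> multi_idx n. (\<Sum>i\<le>n+1. alpha i) = d}"
proof -
  have "{alpha \<in> multi_idx n. (\<Sum>i\<le>n+1. alpha i) = d} \<subseteq>
        {alpha. \<forall>i. (i \<in> {..n+1} \<longrightarrow> alpha i \<in> {..d}) \<and> (i \<notin> {..n+1} \<longrightarrow> alpha i = 0)}"
  proof
    fix alpha assume "alpha \<in> {alpha \<in> multi_idx n. (\<Sum>i\<le>n+1. alpha i) = d}"
    then have a: "\<forall>i>n+1. alpha i = 0" and s: "(\<Sum>i\<le>n+1. alpha i) = d"
      by (auto simp: multi_idx_def)
    have "alpha i \<le> d" for i
    proof (cases "i \<le> n+1")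
      case True
      then have "alpha i \<le> (\<Sum>i\<le>n+1. alpha i)" by (intro member_le_sum) auto
      then show ?thesis using s by simp
    next
      case False
      then show ?thesis using a by simp
    qed
    then show "alpha \<in> {alpha. \<forall>i. (i \<in> {..n+1} \<longrightarrow> alpha i \<in> {..d}) \<and> (i \<notin> {..n+1} \<longrightarrow> alpha i = 0)}"
      using a by auto
  qed
  moreover have "finite {alpha. \<forall>i. (i \<in> {..n+1} \<longrightarrow> alpha i \<in> {..d}) \<and> (i \<notin> {..n+1} \<longrightarrow> alpha i = 0)}"
    by (rule finite_set_of_finite_funs) auto
  ultimately show ?thesis using finite_subset by blast
qed

lemma good_Fd:
  assumes "\<And>i. good m (subst_args phi i)" "0 \<le> m"
  shows "good (real d * m) (Fd_subst n a phi d)"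
  unfolding Fd_subst_def
proof (rule good_dsum[OF finite_multi])
  fix s assume "s \<in> {alpha \<in> multi_idx n. (\<Sum>i\<le>n+1. alpha i) = d}"
  then have e: "(\<Sum>i\<le>n+1. s i) = d" by simp
  have "good (real (\<Sum>i\<le>n+1. s i) * m) (dscale (a s) (dmono n s (subst_args phi)))"
    by (rule good_dscale[OF good_dmono[OF assms]])
  then show "good (real d * m) (dscale (a s) (dmono n s (subst_args phi)))"
    unfolding e .
qed

lemma dulac_pos:
  assumes "is_dulac phi"
  shows "\<exists>m>0. m \<le> 1 \<and> good m phi"
proof -
  define S where "S = {lam. phi lam \<noteq> 0 \<and> Re lam < 1}"
  have fS: "finite S" using assms by (simp add: is_dulac_def S_def)
  have pS: "\<And>lam. lam \<in> S \<Longrightarrow> 0 < Re lam" using assms by (simp add: is_dulac_def S_def)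
  define m where "m = (if S = {} then 1 else min 1 (Min (Re ` S)))"
  have m0: "m > 0"
  proof (cases "S = {}")
    case False
    then have "Min (Re ` S) \<in> Re ` S" using fS by (intro Min_in) auto
    then have "Min (Re ` S) > 0" using pS by auto
    then show ?thesis using False by (simp add: m_def)
  qed (simp add: m_def)
  have m1: "m \<le> 1" by (simp add: m_def)
  have "good m phi" unfolding good_def
  proof safe
    fix lam assume nz: "phi lam \<noteq> 0"
    show "m \<le> Re lam"
    proof (cases "Re lam < 1")
      case True
      then have "lam \<in> S" using nz by (simp add: S_def)
      then have "Min (Re ` S) \<le> Re lam" using fS by (intro Min_le) auto
      then show ?thesis using \<open>lam \<in> S\<close> by (auto simp: m_def)
    next
      case False
      then show ?thesis using m1 by simp
    qed
  next
    fix N show "finite {lam. phi lam \<noteq> 0 \<and> Re lam < N}"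
      using assms by (simp add: is_dulac_def)
  qed
  then show ?thesis using m0 m1 by blast
qed

theorem lemma1:
  fixes n :: nat
    and F :: "(nat \<Rightarrow> complex) \<Rightarrow> complex"
    and a :: "(nat \<Rightarrow> nat) \<Rightarrow> complex"
    and phi :: dser
  assumes "holo_near0_coeffs n F a"
    and "F (\<lambda>_. 0) = 0"
    and "is_dulac phi"
  shows "(\<forall>N::real. finite {d::nat. d \<ge> 1 \<and> (\<exists>lam. Re lam < N \<and> Fd_subst n a phi d lam \<noteq> 0)})
       \<and> is_dulac (\<lambda>lam. \<Sum>d\<in>{d::nat. d \<ge> 1 \<and> Fd_subst n a phi d lam \<noteq> 0}. Fd_subst n a phi d lam)"
proof -
  obtain m where m0: "m > 0" and m1: "m \<le> 1" and gp: "good m phi"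
    using dulac_pos[OF assms(3)] by blast
  have ga: "good m (subst_args phi i)" for i
  proof (cases "i = 0")
    case True
    then show ?thesis using good_mono[OF m1 good_dx] by (simp add: subst_args_def)
  next
    case False
    then show ?thesis using good_ddelta_pow[OF gp] by (simp add: subst_args_def)
  qed
  have gF: "good (real d * m) (Fd_subst n a phi d)" for d
    using good_Fd[OF ga] m0 by simp
  have supp: "real d * m \<le> Re lam" if "Fd_subst n a phi d lam \<noteq> 0" for d lam
    using gF[of d] that unfolding good_def by blast
  have finD: "finite {d::nat. d \<ge> 1 \<and> (\<exists>lam. Re lam < N \<and> Fd_subst n a phi d lam \<noteq> 0)}" for N
  proof -
    have "{d::nat. d \<ge> 1 \<and> (\<exists>lam. Re lam < N \<and> Fd_subst n a phi d lam \<noteq> 0)} \<subseteq> {..nat \<lceil>N / m\<rceil>}"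
    proof
      fix d assume "d \<in> {d::nat. d \<ge> 1 \<and> (\<exists>lam. Re lam < N \<and> Fd_subst n a phi d lam \<noteq> 0)}"
      then obtain lam where "Re lam < N" "Fd_subst n a phi d lam \<noteq> 0" by auto
      then have "real d * m < N" using supp[of d lam] by linarith
      then have "real d < N / m" using m0 by (simp add: field_simps)
      then have "d \<le> nat \<lceil>N / m\<rceil>" by linarith
      then show "d \<in> {..nat \<lceil>N / m\<rceil>}" by simp
    qed
    then show ?thesis by (rule finite_subset) simp
  qed
  define G where "G = (\<lambda>lam. \<Sum>d\<in>{d::nat. d \<ge> 1 \<and> Fd_subst n a phi d lam \<noteq> 0}. Fd_subst n a phi d lam)"
  have exd: "\<exists>d\<ge>1. Fd_subst n a phi d lam \<noteq> 0" if "G lam \<noteq> 0" for lam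
  proof (rule ccontr)
    assume "\<not> ?thesis"
    then have E: "{d::nat. d \<ge> 1 \<and> Fd_subst n a phi d lam \<noteq> 0} = {}" by auto
    have "G lam = 0" unfolding G_def by (simp only: E sum.empty)
    then show False using that by simp
  qed
  have "is_dulac G" unfolding is_dulac_def
  proof safe
    fix lam assume "G lam \<noteq> 0"
    then obtain d where "d \<ge> 1" "Fd_subst n a phi d lam \<noteq> 0" using exd by blast
    then have "real d * m \<le> Re lam" using supp by blast
    moreover have "m \<le> real d * m" using \<open>d \<ge> 1\<close> m0 by simp
    ultimately show "0 < Re lam" using m0 by linarith
  next
    fix N
    let ?D = "{d::nat. d \<ge> 1 \<and> (\<exists>lam. Re lam < N \<and> Fd_subst n a phi d lam \<noteq> 0)}"
    have "{lam. G lam \<noteq> 0 \<and> Re lam < N} \<subseteq> (\<Union>d\<in>?D. {lam. Fd_subst n a phi d lam \<noteq> 0 \<and> Re lam < N})"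
    proof
      fix lam assume "lam \<in> {lam. G lam \<noteq> 0 \<and> Re lam < N}"
      then have "G lam \<noteq> 0" "Re lam < N" by auto
      then obtain d where "d \<ge> 1" "Fd_subst n a phi d lam \<noteq> 0" using exd by blast
      then show "lam \<in> (\<Union>d\<in>?D. {lam. Fd_subst n a phi d lam \<noteq> 0 \<and> Re lam < N})"
        using \<open>Re lam < N\<close> by blast
    qed
    moreover have "finite (\<Union>d\<in>?D. {lam. Fd_subst n a phi d lam \<noteq> 0 \<and> Re lam < N})"
    proof (rule finite_UN_I)
      show "finite ?D" by (rule finD)
      fix d show "finite {lam. Fd_subst n a phi d lam \<noteq> 0 \<and> Re lam < N}"
        using gF[of d] unfolding good_def by blast
    qed
    ultimately show "finite {lam. G lam \<noteq> 0 \<and> Re lam < N}" by (rule finite_subset)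
  qed
  then have dG: "is_dulac (\<lambda>lam. \<Sum>d\<in>{d::nat. d \<ge> 1 \<and> Fd_subst n a phi d lam \<noteq> 0}. Fd_subst n a phi d lam)"
    unfolding G_def .
  show ?thesis
  proof (intro conjI allI)
    fix N show "finite {d::nat. d \<ge> 1 \<and> (\<exists>lam. Re lam < N \<and> Fd_subst n a phi d lam \<noteq> 0)}"
      by (rule finD)
  qed (rule dG)
qed

end
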